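(* For every integer $m\ge3$ and every $\alpha\in[0,1]$, every deterministic social choice rule that always returns a candidate whose integral domination graph admits a perfect matching has distortion exactly $2+\alpha$ on $\alpha$-decisive metric spaces.
   Context: An election: voters $V=\{1,\dots,n\}$, a fixed finite set $C$ of $m$ candidates, a profile $\sigma$ of linear orders over $C$; $a\succeq_i c$ means $a=c$ or $i$ ranks $a$ above $c$; $\mathrm{top}(i)$ is $i$'s first choice. The integral domination graph $G(a)$ is the bipartite graph with both sides copies of $V$ and edge $(i,j)$ iff $a\succeq_i\mathrm{top}(j)$; for every election some candidate has $G(a)$ admitting a perfect matching. A distance function $d$ on $V\cup C$ is nonnegative, symmetric and satisfies the triangle inequality (co-location allowed); consistent with $\sigma$ if $d(i,c)\le d(i,c')$ whenever $i$ ranks $c$ above $c'$; $\alpha$-decisive if $d(i,\mathrm{top}(i))\le\alpha\,d(i,c)$ for all $i$ and $c\ne\mathrm{top}(i)$. $\mathrm{SC}(c)=\sum_i d(i,c)$. Distortion of a deterministic rule $f$ on $\alpha$-decisive spaces: $\sup_\sigma\sup_d\mathrm{SC}(f(\sigma))/\min_c\mathrm{SC}(c)$ over $\alpha$-decisive consistent $d$. *)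

theory Defs
  imports "HOL-Analysis.Analysis" "HOL-Library.Extended_Real"
begin

(* A ranking (linear order over the candidate type 'c) is a list enumerating every
   candidate exactly once; earlier = more preferred. *)
definition is_ranking :: "'c list \<Rightarrow> bool" where
  "is_ranking p \<longleftrightarrow> distinct p \<and> set p = UNIV"

definition is_profile :: "'c list list \<Rightarrow> bool" where
  "is_profile P \<longleftrightarrow> (\<forall>p\<in>set P. is_ranking p)"

definition ranks_above :: "'c list \<Rightarrow> 'c \<Rightarrow> 'c \<Rightarrow> bool" where
  "ranks_above p a c \<longleftrightarrow> (\<exists>k l. k < l \<and> l < length p \<and> p ! k = a \<and> p ! l = c)"

definition weakly_prefers :: "'c list \<Rightarrow> 'c \<Rightarrow> 'c \<Rightarrow> bool" where
  "weakly_prefers p a c \<longleftrightarrow> a = c \<or> ranks_above p a c"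

definition top_choice :: "'c list \<Rightarrow> 'c" where
  "top_choice p = hd p"

(* The integral domination graph G(a): bipartite, both sides copies of V = {0..<n},
   edge (i,j) iff a \<succeq>_i top(j). *)
definition dom_edge :: "'c list list \<Rightarrow> 'c \<Rightarrow> nat \<Rightarrow> nat \<Rightarrow> bool" where
  "dom_edge P a i j \<longleftrightarrow> weakly_prefers (P ! i) a (top_choice (P ! j))"

definition has_perfect_matching :: "'c list list \<Rightarrow> 'c \<Rightarrow> bool" where
  "has_perfect_matching P a \<longleftrightarrow>
     (\<exists>\<pi>. bij_betw \<pi> {..<length P} {..<length P} \<and> (\<forall>i<length P. dom_edge P a i (\<pi> i)))"

definition points :: "'c list list \<Rightarrow> (nat + 'c) set" where
  "points P = Inl ` {..<length P} \<union> Inr ` UNIV"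

(* distance function: nonnegative, symmetric, triangle inequality (co-location allowed) *)
definition is_distance :: "'c list list \<Rightarrow> ((nat + 'c) \<Rightarrow> (nat + 'c) \<Rightarrow> real) \<Rightarrow> bool" where
  "is_distance P d \<longleftrightarrow>
     (\<forall>x\<in>points P. \<forall>y\<in>points P. d x y \<ge> 0 \<and> d x y = d y x) \<and>
     (\<forall>x\<in>points P. \<forall>y\<in>points P. \<forall>z\<in>points P. d x z \<le> d x y + d y z)"

definition consistent :: "'c list list \<Rightarrow> ((nat + 'c) \<Rightarrow> (nat + 'c) \<Rightarrow> real) \<Rightarrow> bool" where
  "consistent P d \<longleftrightarrow>
     (\<forall>i<length P. \<forall>c c'. ranks_above (P ! i) c c' \<longrightarrow> d (Inl i) (Inr c) \<le> d (Inl i) (Inr c'))"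

definition decisive :: "real \<Rightarrow> 'c list list \<Rightarrow> ((nat + 'c) \<Rightarrow> (nat + 'c) \<Rightarrow> real) \<Rightarrow> bool" where
  "decisive \<alpha> P d \<longleftrightarrow>
     (\<forall>i<length P. \<forall>c. c \<noteq> top_choice (P ! i) \<longrightarrow> d (Inl i) (Inr (top_choice (P ! i))) \<le> \<alpha> * d (Inl i) (Inr c))"

definition SC :: "((nat + 'c) \<Rightarrow> (nat + 'c) \<Rightarrow> real) \<Rightarrow> 'c list list \<Rightarrow> 'c \<Rightarrow> real" where
  "SC d P c = (\<Sum>i<length P. d (Inl i) (Inr c))"

(* Distortion of a deterministic rule f on \<alpha>-decisive spaces, as an extended real.
   Ratio in ereal: x/0 = \<infinity> for x>0 and 0/0 = 0. *)
definition distortion :: "real \<Rightarrow> ('c::finite list list \<Rightarrow> 'c) \<Rightarrow> ereal" where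
  "distortion \<alpha> f =
     (SUP Pd \<in> {(P, d). is_profile P \<and> is_distance P d \<and> consistent P d \<and> decisive \<alpha> P d}.
        ereal (SC (snd Pd) (fst Pd) (f (fst Pd))) / ereal (Min (range (SC (snd Pd) (fst Pd)))))"

end

theory Submission
  imports Defs
begin


lemma upper_pt:
  assumes dist: "is_distance P d" and cons: "consistent P d" and dec: "decisive \<alpha> P d"
    and al: "0 \<le> \<alpha>" and i: "i < length P" and j: "j < length P"
    and e: "dom_edge P a i j"
  shows "d (Inl i) (Inr a) \<le> d (Inl i) (Inr c) + (1+\<alpha>) * d (Inl j) (Inr c)"
proof -
  define t where "t = top_choice (P ! j)"
  have pi: "Inl i \<in> points P" and pj: "Inl j \<in> points P" and pc: "\<And>x. Inr x \<in> points P"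
    using i j by (auto simp: points_def)
  have h1: "d (Inl i) (Inr a) \<le> d (Inl i) (Inr t)"
    using e cons i unfolding dom_edge_def weakly_prefers_def consistent_def t_def by auto
  have t1: "d (Inl i) (Inr t) \<le> d (Inl i) (Inr c) + d (Inr c) (Inr t)"
    using dist pi pc unfolding is_distance_def by blast
  have t2: "d (Inr c) (Inr t) \<le> d (Inr c) (Inl j) + d (Inl j) (Inr t)"
    using dist pj pc unfolding is_distance_def by blast
  have sy: "d (Inr c) (Inl j) = d (Inl j) (Inr c)" and nn: "d (Inl j) (Inr c) \<ge> 0"
    using dist pj pc unfolding is_distance_def by auto
  show ?thesis
  proof (cases "t = c")
    case True
    then show ?thesis using h1 nn al by (simp add: t_def) (smt (verit) mult_nonneg_nonneg)
  next
    case False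
    then have "d (Inl j) (Inr t) \<le> \<alpha> * d (Inl j) (Inr c)"
      using dec j unfolding decisive_def t_def by auto
    then show ?thesis using h1 t1 t2 sy by (simp add: algebra_simps)
  qed
qed

lemma upper_SC:
  assumes dist: "is_distance P d" and cons: "consistent P d" and dec: "decisive \<alpha> P d"
    and al: "0 \<le> \<alpha>" and m: "has_perfect_matching P a"
  shows "SC d P a \<le> (2+\<alpha>) * SC d P c"
proof -
  obtain \<pi> where b: "bij_betw \<pi> {..<length P} {..<length P}"
    and e: "\<forall>i<length P. dom_edge P a i (\<pi> i)"
    using m unfolding has_perfect_matching_def by blast
  have "SC d P a \<le> (\<Sum>i<length P. d (Inl i) (Inr c) + (1+\<alpha>) * d (Inl (\<pi> i)) (Inr c))"
    unfolding SC_def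
  proof (rule sum_mono)
    fix i assume i: "i \<in> {..<length P}"
    then have j: "\<pi> i < length P" using b bij_betwE by blast
    have ed: "dom_edge P a i (\<pi> i)" using e i by blast
    show "d (Inl i) (Inr a) \<le> d (Inl i) (Inr c) + (1+\<alpha>) * d (Inl (\<pi> i)) (Inr c)"
      using upper_pt[OF dist cons dec al _ j ed] i by blast
  qed
  also have "\<dots> = SC d P c + (1+\<alpha>) * (\<Sum>i<length P. d (Inl (\<pi> i)) (Inr c))"
    by (simp add: SC_def sum.distrib sum_distrib_left)
  also have "(\<Sum>i<length P. d (Inl (\<pi> i)) (Inr c)) = SC d P c"
    unfolding SC_def using sum.reindex_bij_betw[OF b, of "\<lambda>j. d (Inl j) (Inr c)"] by simp
  finally show ?thesis by (simp add: algebra_simps)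
qed

lemma SC_nonneg: "is_distance P d \<Longrightarrow> SC d P c \<ge> 0"
  unfolding SC_def is_distance_def points_def by (auto intro!: sum_nonneg)

lemma upper_ratio:
  fixes P :: "'c::finite list list"
  assumes dist: "is_distance P d" and cons: "consistent P d" and dec: "decisive \<alpha> P d"
    and al: "0 \<le> \<alpha>" and m: "has_perfect_matching P a"
  shows "ereal (SC d P a) / ereal (Min (range (SC d P))) \<le> ereal (2+\<alpha>)"
proof -
  have "Min (range (SC d P)) \<in> range (SC d P)" by (rule Min_in) auto
  then obtain c where c: "Min (range (SC d P)) = SC d P c" by (metis rangeE)
  have u: "SC d P a \<le> (2+\<alpha>) * SC d P c" by (rule upper_SC[OF assms])
  have n0: "SC d P c \<ge> 0" "SC d P a \<ge> 0" using SC_nonneg[OF dist] by auto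
  show ?thesis
  proof (cases "SC d P c = 0")
    case True
    then have "SC d P a = 0" using u n0 by simp
    then show ?thesis using True c al by simp
  next
    case False
    then have "SC d P a / SC d P c \<le> 2+\<alpha>" using u n0 by (simp add: divide_le_eq)
    then show ?thesis using False c by simp
  qed
qed



definition Dl :: "real \<Rightarrow> nat \<Rightarrow> nat \<Rightarrow> real" where
  "Dl \<alpha> u v = (if u = v then 0 else if u = 4 \<or> v = 4 then 3
     else if (u = 2 \<and> v = 3) \<or> (u = 3 \<and> v = 2) then \<alpha>
     else if u = 3 \<or> v = 3 then 1 else 1 + \<alpha>)"

lemma five: "(u::nat) < 5 \<Longrightarrow> u = 0 \<or> u = 1 \<or> u = 2 \<or> u = 3 \<or> u = 4" by auto

lemma Dl_tri: "0 \<le> \<alpha> \<Longrightarrow> \<alpha> \<le> 1 \<Longrightarrow> u < 5 \<Longrightarrow> v < 5 \<Longrightarrow> w < 5 \<Longrightarrow>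
   Dl \<alpha> u w \<le> Dl \<alpha> u v + Dl \<alpha> v w"
  apply (drule five)+ by (auto simp: Dl_def)

lemma Dl_sym: "Dl \<alpha> u v = Dl \<alpha> v u" by (auto simp: Dl_def)
lemma Dl_nn: "0 \<le> \<alpha> \<Longrightarrow> Dl \<alpha> u v \<ge> 0" by (auto simp: Dl_def)

lemma ra_pos:
  assumes "distinct (x#y#z#rest)" "ranks_above (x#y#z#rest) u v"
  shows "(u = x \<and> v \<in> {y,z} \<union> set rest) \<or> (u = y \<and> v \<in> {z} \<union> set rest)
       \<or> (u = z \<and> v \<in> set rest) \<or> (u \<in> set rest \<and> v \<in> set rest)"
proof -
  obtain k l where kl: "k < l" "l < length (x#y#z#rest)" "(x#y#z#rest) ! k = u" "(x#y#z#rest) ! l = v"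
    using assms(2) unfolding ranks_above_def by blast
  show ?thesis
  proof (cases "k \<ge> 3")
    case True
    then show ?thesis using kl by (auto simp: nth_Cons' nth_mem)
  next
    case False
    then have "k = 0 \<or> k = 1 \<or> k = 2" by auto
    then show ?thesis using kl by (auto simp: nth_Cons' nth_mem split: if_splits)
  qed
qed



definition Rk :: "'c \<Rightarrow> 'c \<Rightarrow> 'c \<Rightarrow> 'c list \<Rightarrow> nat \<Rightarrow> nat \<Rightarrow> 'c list" where
  "Rk a b c rest k j = (if j < k then c#a#b#rest else if j < 2*k then b#a#c#rest
      else if j = 2*k then a#b#c#rest else a#c#b#rest)"

definition Pk :: "'c \<Rightarrow> 'c \<Rightarrow> 'c \<Rightarrow> 'c list \<Rightarrow> nat \<Rightarrow> 'c list list" where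
  "Pk a b c rest k = map (Rk a b c rest k) [0..<2*k+2]"

definition locv :: "nat \<Rightarrow> nat \<Rightarrow> nat" where
  "locv k i = (if i < k then 0 else if i < 2*k then 3 else 1)"

definition locc :: "'c \<Rightarrow> 'c \<Rightarrow> 'c \<Rightarrow> 'c \<Rightarrow> nat" where
  "locc a b c w = (if w = c then 0 else if w = a then 1 else if w = b then 2 else 4)"

definition dk :: "real \<Rightarrow> 'c \<Rightarrow> 'c \<Rightarrow> 'c \<Rightarrow> nat \<Rightarrow> (nat + 'c) \<Rightarrow> (nat + 'c) \<Rightarrow> real" where
  "dk \<alpha> a b c k u v = Dl \<alpha> (case_sum (locv k) (locc a b c) u) (case_sum (locv k) (locc a b c) v)"

lemma Pk_len[simp]: "length (Pk a b c rest k) = 2*k+2" by (simp add: Pk_def)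
lemma Pk_nth[simp]: "j < 2*k+2 \<Longrightarrow> Pk a b c rest k ! j = Rk a b c rest k j"
  by (simp add: Pk_def del: upt_Suc)

lemma dk_simp[simp]: "dk \<alpha> a b c k (Inl i) (Inr w) = Dl \<alpha> (locv k i) (locc a b c w)"
  by (simp add: dk_def)

lemma wp_last:
  assumes "distinct (x#y#z#rest)" "t \<in> {x,y,z}" "weakly_prefers (x#y#z#rest) z t"
  shows "t = z"
  using assms ra_pos[OF assms(1), of z t] unfolding weakly_prefers_def by auto

lemma wp_rest:
  assumes "distinct (x#y#z#rest)" "t \<in> {x,y,z}" "w \<in> set rest"
  shows "\<not> weakly_prefers (x#y#z#rest) w t"
  using assms ra_pos[OF assms(1), of w t] unfolding weakly_prefers_def by auto

lemma card_contra:
  assumes b: "bij_betw \<pi> {..<n} {..<n}" and S: "S \<subseteq> {..<n}" and m: "\<forall>i\<in>S. \<pi> i \<in> T"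
    and f: "finite T" and c: "card T < card S"
  shows False
proof -
  have "inj_on \<pi> S" using b S bij_betw_imp_inj_on inj_on_subset by blast
  then have "card S = card (\<pi> ` S)" by (simp add: card_image)
  also have "\<dots> \<le> card T" using m f by (intro card_mono) auto
  finally show False using c by simp
qed

context
  fixes a b c :: "'c::finite" and rest :: "'c list" and k :: nat and \<alpha> :: real
  assumes abc: "distinct [a,b,c]" and dr: "distinct rest" and sr: "set rest = UNIV - {a,b,c}"
    and k1: "k \<ge> 1" and al0: "0 \<le> \<alpha>" and al1: "\<alpha> \<le> 1"
begin

lemma dists: "distinct (c#a#b#rest)" "distinct (b#a#c#rest)" "distinct (a#b#c#rest)" "distinct (a#c#b#rest)"
  using abc dr sr by auto

lemma Rk_ranking: "is_ranking (Rk a b c rest k j)"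
  using dists sr unfolding is_ranking_def Rk_def by auto

lemma profile: "is_profile (Pk a b c rest k)"
  unfolding is_profile_def Pk_def using Rk_ranking by auto

lemma top_Rk: "top_choice (Rk a b c rest k j) = (if j < k then c else if j < 2*k then b else a)"
  by (simp add: top_choice_def Rk_def)

lemma loc_lt5: "case_sum (locv k) (locc a b c) u < 5"
  by (cases u) (auto simp: locv_def locc_def)

lemma distance: "is_distance (Pk a b c rest k) (dk \<alpha> a b c k)"
proof -
  have t: "\<And>u v w. dk \<alpha> a b c k u w \<le> dk \<alpha> a b c k u v + dk \<alpha> a b c k v w"
    unfolding dk_def by (rule Dl_tri[OF al0 al1 loc_lt5 loc_lt5 loc_lt5])
  have s: "\<And>u v. dk \<alpha> a b c k u v = dk \<alpha> a b c k v u" unfolding dk_def by (rule Dl_sym)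
  have n: "\<And>u v. dk \<alpha> a b c k u v \<ge> 0" unfolding dk_def by (rule Dl_nn[OF al0])
  show ?thesis unfolding is_distance_def using t s n by blast
qed

lemma rest_iff: "w \<in> set rest \<longleftrightarrow> w \<notin> {a,b,c}" using sr by auto

lemma groups:
  assumes "i < 2*k+2"
  obtains "i < k" | "k \<le> i" "i < 2*k" | "i = 2*k" | "i = 2*k+1"
  using assms by linarith

lemma consistent: "consistent (Pk a b c rest k) (dk \<alpha> a b c k)"
  unfolding consistent_def
proof (intro allI impI)
  fix i u v assume i: "i < length (Pk a b c rest k)" and r: "ranks_above (Pk a b c rest k ! i) u v"
  have i': "i < 2*k+2" using i by simp
  have r': "ranks_above (Rk a b c rest k i) u v" using r i' by simp
  show "dk \<alpha> a b c k (Inl i) (Inr u) \<le> dk \<alpha> a b c k (Inl i) (Inr v)"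
  proof (cases rule: groups[OF i'])
    case 1
    then show ?thesis using ra_pos[OF dists(1)] r' abc al0 al1
      by (auto simp: Rk_def Dl_def locc_def locv_def rest_iff)
  next
    case 2
    then show ?thesis using ra_pos[OF dists(2)] r' abc al0 al1
      by (auto simp: Rk_def Dl_def locc_def locv_def rest_iff)
  next
    case 3
    then show ?thesis using ra_pos[OF dists(3)] r' abc al0 al1
      by (auto simp: Rk_def Dl_def locc_def locv_def rest_iff)
  next
    case 4
    then show ?thesis using ra_pos[OF dists(4)] r' abc al0 al1
      by (auto simp: Rk_def Dl_def locc_def locv_def rest_iff)
  qed
qed

lemma decisive: "decisive \<alpha> (Pk a b c rest k) (dk \<alpha> a b c k)"
  unfolding decisive_def
proof (intro allI impI)
  fix i w assume i: "i < length (Pk a b c rest k)" and w: "w \<noteq> top_choice (Pk a b c rest k ! i)"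
  have i': "i < 2*k+2" using i by simp
  show "dk \<alpha> a b c k (Inl i) (Inr (top_choice (Pk a b c rest k ! i))) \<le> \<alpha> * dk \<alpha> a b c k (Inl i) (Inr w)"
    using i' w abc al0 al1 by (auto simp: top_Rk Dl_def locc_def locv_def)
qed

lemma only_a:
  assumes m: "has_perfect_matching (Pk a b c rest k) w"
  shows "w = a"
proof -
  obtain \<pi> where bj: "bij_betw \<pi> {..<2*k+2} {..<2*k+2}"
    and e0: "\<forall>i<2*k+2. dom_edge (Pk a b c rest k) w i (\<pi> i)"
    using m unfolding has_perfect_matching_def by auto
  have pl: "\<And>i. i < 2*k+2 \<Longrightarrow> \<pi> i < 2*k+2" using bj bij_betwE by blast
  have e: "\<forall>i<2*k+2. weakly_prefers (Rk a b c rest k i) w (top_choice (Rk a b c rest k (\<pi> i)))"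
    using e0 pl unfolding dom_edge_def by auto
  have tin: "\<And>j. top_choice (Rk a b c rest k j) \<in> {a,b,c}" by (simp add: top_Rk)
  show ?thesis
  proof (rule ccontr)
    assume wa: "w \<noteq> a"
    consider "w = b" | "w = c" | "w \<in> set rest" using wa rest_iff by blast
    then show False
    proof cases
      case 1
      have M: "\<forall>i\<in>{..<k} \<union> {2*k+1}. \<pi> i \<in> {k..<2*k}"
      proof
        fix i assume i: "i \<in> {..<k} \<union> {2*k+1}"
        then have i2: "i < 2*k+2" by auto
        have "top_choice (Rk a b c rest k (\<pi> i)) = b"
        proof (cases "i < k")
          case True
          then have "Rk a b c rest k i = c#a#b#rest" by (simp add: Rk_def)
          then show ?thesis using wp_last[OF dists(1) _ , of "top_choice (Rk a b c rest k (\<pi> i))"] tin e[rule_format, OF i2] 1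
            by (simp add: insert_commute)
        next
          case False
          then have "i = 2*k+1" using i by auto
          then have "Rk a b c rest k i = a#c#b#rest" by (simp add: Rk_def)
          then show ?thesis using wp_last[OF dists(4), of "top_choice (Rk a b c rest k (\<pi> i))"] tin e[rule_format, OF i2] 1
            by (simp add: insert_commute)
        qed
        then show "\<pi> i \<in> {k..<2*k}" using abc pl[OF i2] by (auto simp: top_Rk split: if_splits)
      qed
      show False by (rule card_contra[OF bj _ M]) auto
    next
      case 2
      have M: "\<forall>i\<in>{k..<2*k} \<union> {2*k}. \<pi> i \<in> {..<k}"
      proof
        fix i assume i: "i \<in> {k..<2*k} \<union> {2*k}"
        then have i2: "i < 2*k+2" by auto
        have "top_choice (Rk a b c rest k (\<pi> i)) = c"
        proof (cases "i < 2*k")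
          case True
          then have "Rk a b c rest k i = b#a#c#rest" using i by (simp add: Rk_def)
          then show ?thesis using wp_last[OF dists(2), of "top_choice (Rk a b c rest k (\<pi> i))"] tin e[rule_format, OF i2] 2
            by (simp add: insert_commute)
        next
          case False
          then have "i = 2*k" using i by auto
          then have "Rk a b c rest k i = a#b#c#rest" by (simp add: Rk_def)
          then show ?thesis using wp_last[OF dists(3), of "top_choice (Rk a b c rest k (\<pi> i))"] tin e[rule_format, OF i2] 2
            by (simp add: insert_commute)
        qed
        then show "\<pi> i \<in> {..<k}" using abc pl[OF i2] by (auto simp: top_Rk split: if_splits)
      qed
      show False by (rule card_contra[OF bj _ M]) auto
    next
      case 3
      have "weakly_prefers (Rk a b c rest k 0) w (top_choice (Rk a b c rest k (\<pi> 0)))"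
        using e k1 by auto
      moreover have "Rk a b c rest k 0 = c#a#b#rest" using k1 by (simp add: Rk_def)
      ultimately show False using wp_rest[OF dists(1) _ 3] tin by (simp add: insert_commute)
    qed
  qed
qed

lemma sum_split: "(\<Sum>i<2*k+2. g i) = (\<Sum>i<k. g i) + (\<Sum>i\<in>{k..<2*k}. g i) + g (2*k) + (g (2*k+1)::real)"
proof -
  have "(\<Sum>i<k+k. g i) = (\<Sum>i<k. g i) + (\<Sum>i\<in>{k..<k+k}. g i)"
    using sum.atLeastLessThan_concat[of 0 k "k+k" g] by (simp add: atLeast0LessThan)
  then show ?thesis by (simp add: mult_2)
qed

lemma SC_a: "SC (dk \<alpha> a b c k) (Pk a b c rest k) a = real k * (2 + \<alpha>)"
proof -
  have "SC (dk \<alpha> a b c k) (Pk a b c rest k) a = (\<Sum>i<k. 1+\<alpha>) + (\<Sum>i\<in>{k..<2*k}. 1) + 0 + 0"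
    unfolding SC_def Pk_len dk_simp sum_split
    using abc by (intro arg_cong2[where f="(+)"] sum.cong) (auto simp: locv_def locc_def Dl_def)
  then show ?thesis by (simp add: algebra_simps)
qed

lemma SC_c: "SC (dk \<alpha> a b c k) (Pk a b c rest k) c = real k + 2 * (1 + \<alpha>)"
proof -
  have "SC (dk \<alpha> a b c k) (Pk a b c rest k) c = (\<Sum>i<k. 0) + (\<Sum>i\<in>{k..<2*k}. 1) + (1+\<alpha>) + (1+\<alpha>)"
    unfolding SC_def Pk_len dk_simp sum_split
    using abc by (intro arg_cong2[where f="(+)"] sum.cong) (auto simp: locv_def locc_def Dl_def)
  then show ?thesis by (simp add: algebra_simps)
qed

lemma SC_pos: "SC (dk \<alpha> a b c k) (Pk a b c rest k) w > 0"
proof -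
  have nn: "\<And>i. i \<in> {..<2*k+2} \<Longrightarrow> 0 \<le> dk \<alpha> a b c k (Inl i) (Inr w)"
    using Dl_nn[OF al0] by simp
  show ?thesis
  proof (cases "w = c")
    case True
    have "0 < dk \<alpha> a b c k (Inl (2*k)) (Inr w)" using True al0 by (simp add: locv_def locc_def Dl_def)
    also have "\<dots> \<le> SC (dk \<alpha> a b c k) (Pk a b c rest k) w"
      unfolding SC_def Pk_len by (rule member_le_sum) (use nn in auto)
    finally show ?thesis .
  next
    case False
    have "0 < dk \<alpha> a b c k (Inl 0) (Inr w)" using False al0 k1 by (simp add: locv_def locc_def Dl_def)
    also have "\<dots> \<le> SC (dk \<alpha> a b c k) (Pk a b c rest k) w"
      unfolding SC_def Pk_len by (rule member_le_sum) (use nn in auto)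
    finally show ?thesis .
  qed
qed

lemma ratio_ge:
  "ereal (real k * (2+\<alpha>) / (real k + 2 * (1+\<alpha>))) \<le>
   ereal (SC (dk \<alpha> a b c k) (Pk a b c rest k) a) / ereal (Min (range (SC (dk \<alpha> a b c k) (Pk a b c rest k))))"
proof -
  let ?S = "SC (dk \<alpha> a b c k) (Pk a b c rest k)"
  have "Min (range ?S) \<in> range ?S" by (rule Min_in) auto
  then obtain w where w: "Min (range ?S) = ?S w" by (metis rangeE)
  have p: "?S w > 0" by (rule SC_pos)
  have le: "?S w \<le> ?S c" using w by (metis Min_le finite UNIV_I finite_imageI image_eqI)
  have "?S a / ?S c \<le> ?S a / ?S w"
    using p le SC_a al0 by (intro divide_left_mono) auto
  then show ?thesis using w p SC_a SC_c by simp
qed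

end

lemma exists_k:
  fixes r \<alpha> :: real
  assumes "r < 2+\<alpha>" "0 \<le> \<alpha>"
  shows "\<exists>k::nat. k \<ge> 1 \<and> r < real k * (2+\<alpha>) / (real k + 2*(1+\<alpha>))"
proof -
  define \<delta> where "\<delta> = 2+\<alpha>-r"
  have dp: "\<delta> > 0" using assms by (simp add: \<delta>_def)
  obtain n :: nat where n: "\<bar>r\<bar>*(2+2*\<alpha>)/\<delta> < real n" using reals_Archimedean2 by blast
  define k where "k = n+1"
  have "\<bar>r\<bar>*(2+2*\<alpha>) < real n * \<delta>" using n dp by (simp add: divide_less_eq)
  also have "\<dots> \<le> real k * \<delta>" using dp by (simp add: k_def)
  finally have "r*(2+2*\<alpha>) < real k * \<delta>"
    by (smt (verit) abs_ge_self assms(2) mult_right_mono)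
  then have "r * (real k + 2*(1+\<alpha>)) < real k * (2+\<alpha>)"
    by (simp add: \<delta>_def algebra_simps)
  moreover have "real k + 2*(1+\<alpha>) > 0" using assms by simp
  ultimately have "r < real k * (2+\<alpha>) / (real k + 2*(1+\<alpha>))"
    by (simp add: pos_less_divide_eq)
  then show ?thesis by (intro exI[of _ k]) (simp add: k_def)
qed

theorem proposition5:
  fixes f :: "'c::finite list list \<Rightarrow> 'c" and \<alpha> :: real
  assumes "CARD('c) \<ge> 3"
    and "0 \<le> \<alpha>" and "\<alpha> \<le> 1"
    and "\<forall>P. is_profile P \<longrightarrow> has_perfect_matching P (f P)"
  shows "distortion \<alpha> f = ereal (2 + \<alpha>)"
proof (rule antisym)
  show "distortion \<alpha> f \<le> ereal (2 + \<alpha>)"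
    unfolding distortion_def SUP_le_iff
  proof (intro ballI)
    fix Pd :: "'c list list \<times> ((nat + 'c) \<Rightarrow> (nat + 'c) \<Rightarrow> real)"
    assume "Pd \<in> {(P, d). is_profile P \<and> is_distance P d \<and> consistent P d \<and> decisive \<alpha> P d}"
    then obtain P d where Pd: "Pd = (P,d)" "is_profile P" "is_distance P d" "consistent P d" "decisive \<alpha> P d"
      by auto
    show "ereal (SC (snd Pd) (fst Pd) (f (fst Pd))) / ereal (Min (range (SC (snd Pd) (fst Pd)))) \<le> ereal (2 + \<alpha>)"
    proof -
      have "has_perfect_matching P (f P)" using assms(4) Pd(2) by blast
      then have "ereal (SC d P (f P)) / ereal (Min (range (SC d P))) \<le> ereal (2+\<alpha>)"
        by (rule upper_ratio[OF Pd(3,4,5) assms(2)])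
      then show ?thesis by (simp only: Pd(1) fst_conv snd_conv)
    qed
  qed
next
  obtain T :: "'c set" where T: "card T = 3" using obtain_subset_with_card_n[OF assms(1)] by metis
  then obtain a b c :: 'c where abc: "distinct [a,b,c]" unfolding card_3_iff by auto
  obtain rest where rest: "set rest = UNIV - {a,b,c}" "distinct rest"
    using finite_distinct_list[of "UNIV - {a,b,c} :: 'c set"] by auto
  let ?A = "{(P, d). is_profile P \<and> is_distance P d \<and> consistent P d \<and> decisive \<alpha> P d}"
  let ?F = "\<lambda>Pd. ereal (SC (snd Pd) (fst Pd) (f (fst Pd))) / ereal (Min (range (SC (snd Pd) (fst Pd))))"
  have inst: "\<exists>i\<in>?A. ereal r < ?F i" if r: "r < 2+\<alpha>" for r
  proof -
    obtain k where k: "k \<ge> 1" "r < real k * (2+\<alpha>) / (real k + 2*(1+\<alpha>))"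
      using exists_k[OF r assms(2)] by blast
    note ctx = abc rest(2) rest(1) k(1) assms(2) assms(3)
    have fa: "f (Pk a b c rest k) = a"
      using only_a[OF ctx] assms(4) profile[OF ctx] by blast
    have mem: "(Pk a b c rest k, dk \<alpha> a b c k) \<in> ?A"
      using profile[OF ctx] distance[OF ctx] consistent[OF ctx] decisive[OF ctx] by blast
    have "ereal r < ereal (real k * (2+\<alpha>) / (real k + 2*(1+\<alpha>)))" using k by simp
    also have "\<dots> \<le> ?F (Pk a b c rest k, dk \<alpha> a b c k)"
      unfolding fst_conv snd_conv fa by (rule ratio_ge[OF ctx])
    finally show ?thesis using mem by blast
  qed
  show "ereal (2 + \<alpha>) \<le> distortion \<alpha> f"
    unfolding distortion_def le_SUP_iff
  proof (intro allI impI)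
    fix y assume y: "y < ereal (2 + \<alpha>)"
    show "\<exists>i\<in>?A. y < ?F i"
    proof (cases y)
      case (real r)
      then show ?thesis using inst y by simp
    next
      case PInf
      then show ?thesis using y by simp
    next
      case MInf
      obtain i where "i \<in> ?A" "ereal 0 < ?F i" using inst[of 0] assms(2) by auto
      moreover have "(-\<infinity>::ereal) < ereal 0" by simp
      ultimately show ?thesis using MInf by (meson order.strict_trans)
    qed
  qed
qed

end
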